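(* Every finite tree $G$ is diagonal, i.e. $\mathrm{MH}_{k,l}(G)=0$ whenever $k\neq l$.
   Context: All graphs are finite, simple, undirected and connected; $d$ denotes the shortest-path distance on the vertex set $V(G)$. For vertices $x_0,\dots,x_k$ put $\ell(x_0,\dots,x_k)=\sum_{i=0}^{k-1}d(x_i,x_{i+1})$. The magnitude chain complex: $\mathrm{MC}_{k,l}(G)$ is the free abelian group on $I_{k,l}(G)=\{(x_0,\dots,x_k)\in V(G)^{k+1}: x_i\neq x_{i+1}\text{ for all } i,\ \ell(x_0,\dots,x_k)=l\}$, with differential $\partial:\mathrm{MC}_{k,l}(G)\to\mathrm{MC}_{k-1,l}(G)$, $\partial=\sum_{i=1}^{k-1}(-1)^i\partial_i$, where $\partial_i(x_0,\dots,x_k)=(x_0,\dots,\hat x_i,\dots,x_k)$ if $\ell(x_0,\dots,\hat x_i,\dots,x_k)=\ell(x_0,\dots,x_k)$ and $\partial_i(x_0,\dots,x_k)=0$ otherwise. The magnitude homology is $\mathrm{MH}_{k,l}(G)=H_k(\mathrm{MC}_{*,l}(G))$. A graph $G$ is called diagonal if $\mathrm{MH}_{k,l}(G)=0$ whenever $k\neq l$. *)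

theory Defs
  imports Main
begin

definition simple_graph :: "'a set \<Rightarrow> ('a \<Rightarrow> 'a \<Rightarrow> bool) \<Rightarrow> bool" where
  "simple_graph V E \<longleftrightarrow> finite V \<and> (\<forall>x y. E x y \<longrightarrow> x \<in> V \<and> y \<in> V)
     \<and> (\<forall>x y. E x y \<longrightarrow> E y x) \<and> (\<forall>x. \<not> E x x)"

definition walk :: "'a set \<Rightarrow> ('a \<Rightarrow> 'a \<Rightarrow> bool) \<Rightarrow> 'a list \<Rightarrow> bool" where
  "walk V E p \<longleftrightarrow> p \<noteq> [] \<and> set p \<subseteq> V \<and> (\<forall>i. Suc i < length p \<longrightarrow> E (p ! i) (p ! Suc i))"

definition connected_graph :: "'a set \<Rightarrow> ('a \<Rightarrow> 'a \<Rightarrow> bool) \<Rightarrow> bool" where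
  "connected_graph V E \<longleftrightarrow> V \<noteq> {} \<and>
     (\<forall>x\<in>V. \<forall>y\<in>V. \<exists>p. walk V E p \<and> hd p = x \<and> last p = y)"

definition is_cycle :: "'a set \<Rightarrow> ('a \<Rightarrow> 'a \<Rightarrow> bool) \<Rightarrow> 'a list \<Rightarrow> bool" where
  "is_cycle V E c \<longleftrightarrow> length c \<ge> 3 \<and> distinct c \<and> walk V E c \<and> E (last c) (hd c)"

definition is_tree :: "'a set \<Rightarrow> ('a \<Rightarrow> 'a \<Rightarrow> bool) \<Rightarrow> bool" where
  "is_tree V E \<longleftrightarrow> simple_graph V E \<and> connected_graph V E \<and> (\<nexists>c. is_cycle V E c)"

definition dist :: "'a set \<Rightarrow> ('a \<Rightarrow> 'a \<Rightarrow> bool) \<Rightarrow> 'a \<Rightarrow> 'a \<Rightarrow> nat" where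
  "dist V E x y = (LEAST n. \<exists>p. walk V E p \<and> hd p = x \<and> last p = y \<and> length p = Suc n)"

definition tlen :: "'a set \<Rightarrow> ('a \<Rightarrow> 'a \<Rightarrow> bool) \<Rightarrow> 'a list \<Rightarrow> nat" where
  "tlen V E xs = (\<Sum>i<length xs - 1. dist V E (xs ! i) (xs ! Suc i))"

definition Igen :: "'a set \<Rightarrow> ('a \<Rightarrow> 'a \<Rightarrow> bool) \<Rightarrow> nat \<Rightarrow> nat \<Rightarrow> 'a list set" where
  "Igen V E k l = {xs. length xs = Suc k \<and> set xs \<subseteq> V \<and>
      (\<forall>i<k. xs ! i \<noteq> xs ! Suc i) \<and> tlen V E xs = l}"

text \<open>MC_{k,l}(G): integer chains, i.e. finitely supported functions supported on I_{k,l}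
  (finite support is automatic as I_{k,l} is finite for finite graphs).\<close>
definition MC :: "'a set \<Rightarrow> ('a \<Rightarrow> 'a \<Rightarrow> bool) \<Rightarrow> nat \<Rightarrow> nat \<Rightarrow> ('a list \<Rightarrow> int) set" where
  "MC V E k l = {c. (\<forall>xs. c xs \<noteq> 0 \<longrightarrow> xs \<in> Igen V E k l) \<and> finite {xs. c xs \<noteq> 0}}"

definition face :: "nat \<Rightarrow> 'a list \<Rightarrow> 'a list" where
  "face i xs = take i xs @ drop (Suc i) xs"

definition bd :: "'a set \<Rightarrow> ('a \<Rightarrow> 'a \<Rightarrow> bool) \<Rightarrow> nat \<Rightarrow> nat \<Rightarrow> ('a list \<Rightarrow> int) \<Rightarrow> ('a list \<Rightarrow> int)" where
  "bd V E k l c = (\<lambda>ys. \<Sum>xs\<in>{xs. c xs \<noteq> 0}. c xs *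
      (\<Sum>i\<in>{1..<k}. if tlen V E (face i xs) = tlen V E xs \<and> face i xs = ys then (-1)^i else 0))"

text \<open>MH_{k,l}(G) = ker(d: MC_{k,l} -> MC_{k-1,l}) / im(d: MC_{k+1,l} -> MC_{k,l}) vanishes
  (for k = 0 the kernel is all of MC_{0,l}, as d on MC_0 is the empty sum).\<close>
definition MH_zero :: "'a set \<Rightarrow> ('a \<Rightarrow> 'a \<Rightarrow> bool) \<Rightarrow> nat \<Rightarrow> nat \<Rightarrow> bool" where
  "MH_zero V E k l \<longleftrightarrow> (\<forall>c\<in>MC V E k l. bd V E k l c = (\<lambda>_. 0) \<longrightarrow>
      (\<exists>b\<in>MC V E (Suc k) l. bd V E (Suc k) l b = c))"

definition diagonal :: "'a set \<Rightarrow> ('a \<Rightarrow> 'a \<Rightarrow> bool) \<Rightarrow> bool" where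
  "diagonal V E \<longleftrightarrow> (\<forall>k l. k \<noteq> l \<longrightarrow> MH_zero V E k l)"

end

theory Submission
  imports Defs
begin


locale tr =
  fixes V :: "'a set" and E :: "'a \<Rightarrow> 'a \<Rightarrow> bool"
  assumes T: "is_tree V E"
begin

abbreviation d where "d \<equiv> dist V E"

lemma sg: "simple_graph V E" using T by (simp add: is_tree_def)
lemma Esym: "E x y \<Longrightarrow> E y x" using sg by (simp add: simple_graph_def)
lemma Eirr: "\<not> E x x" using sg by (simp add: simple_graph_def)
lemma EV: "E x y \<Longrightarrow> x \<in> V \<and> y \<in> V" using sg by (simp add: simple_graph_def)
lemma nocyc: "\<not> is_cycle V E c" using T by (simp add: is_tree_def)
lemma conn: "x \<in> V \<Longrightarrow> y \<in> V \<Longrightarrow> \<exists>p. walk V E p \<and> hd p = x \<and> last p = y"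
  using T by (simp add: is_tree_def connected_graph_def)

lemma dist_le: "walk V E p \<Longrightarrow> hd p = x \<Longrightarrow> last p = y \<Longrightarrow> d x y \<le> length p - 1"
  unfolding dist_def
  by (rule Least_le) (metis Suc_diff_1 length_greater_0_conv walk_def)

lemma dist_walk: assumes "x \<in> V" "y \<in> V"
  shows "\<exists>p. walk V E p \<and> hd p = x \<and> last p = y \<and> length p = Suc (d x y)"
proof -
  obtain p where p: "walk V E p" "hd p = x" "last p = y" using conn assms by blast
  then have "\<exists>n p. walk V E p \<and> hd p = x \<and> last p = y \<and> length p = Suc n"
    by (metis Suc_pred length_greater_0_conv walk_def)
  then show ?thesis unfolding dist_def by (rule LeastI_ex)
qed

lemma walk_single: "x \<in> V \<Longrightarrow> walk V E [x]" by (simp add: walk_def)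

lemma d_refl: "x \<in> V \<Longrightarrow> d x x = 0"
  using dist_le[of "[x]" x x] walk_single by simp

lemma walk_hd_last_len1: "length p = 1 \<Longrightarrow> hd p = last p"
  by (cases p) auto

lemma d_zero: assumes "x \<in> V" "y \<in> V" "d x y = 0" shows "x = y"
  using dist_walk[OF assms(1,2)] assms(3) walk_hd_last_len1 by force

lemma walk_rev: "walk V E p \<Longrightarrow> walk V E (rev p)"
  unfolding walk_def
  apply (auto simp: rev_nth)
  apply (rule Esym)
  apply (drule_tac x="length p - Suc (Suc i)" in spec)
  by (simp add: Suc_diff_Suc)

lemma d_sym: assumes "x \<in> V" "y \<in> V" shows "d x y = d y x"
proof -
  have *: "d a b \<le> d b a" if ha: "a \<in> V" and hb: "b \<in> V" for a b
  proof -
    obtain p where p: "walk V E p" "hd p = b" "last p = a" "length p = Suc (d b a)"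
      using dist_walk[OF hb ha] by blast
    have "p \<noteq> []" using p walk_def by auto
    then show ?thesis using dist_le[OF walk_rev[OF p(1)]] p by (simp add: hd_rev last_rev)
  qed
  show ?thesis using *[OF assms] *[OF assms(2,1)] by simp
qed

lemma walk_append: assumes "walk V E p" "walk V E q" "last p = hd q"
  shows "walk V E (p @ tl q)"
proof -
  have pne: "p \<noteq> []" and qne: "q \<noteq> []" using assms walk_def by auto
  have "set (p @ tl q) \<subseteq> V" using assms by (auto simp: walk_def dest: list.set_sel(2))
  moreover have "E ((p @ tl q) ! i) ((p @ tl q) ! Suc i)" if "Suc i < length (p @ tl q)" for i
  proof (cases "Suc i < length p")
    case True then show ?thesis using assms(1) by (simp add: walk_def nth_append)
  next
    case False
    show ?thesis
    proof (cases "i < length p")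
      case True
      then have "i = length p - 1" using False by simp
      then have "(p @ tl q) ! i = q ! 0" using pne qne assms(3)
        by (simp add: nth_append last_conv_nth hd_conv_nth)
      moreover have "(p @ tl q) ! Suc i = q ! 1" using \<open>i = length p - 1\<close> pne qne that
        by (simp add: nth_append nth_tl)
      ultimately show ?thesis using assms(2) that qne \<open>i = length p - 1\<close>
        by (auto simp: walk_def)
    next
      case False
      then have "(p @ tl q) ! i = q ! (i - length p + 1)" "(p @ tl q) ! Suc i = q ! (Suc i - length p + 1)"
        using that qne by (auto simp: nth_append nth_tl)
      moreover have "Suc (i - length p + 1) < length q" using that False qne by auto
      moreover have "Suc i - length p + 1 = Suc (i - length p + 1)" using False by simp
      ultimately show ?thesis using assms(2) unfolding walk_def by metis
    qed
  qed
  ultimately show ?thesis using pne by (simp add: walk_def)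
qed

lemma d_tri: assumes "x \<in> V" "y \<in> V" "z \<in> V" shows "d x z \<le> d x y + d y z"
proof -
  obtain p where p: "walk V E p" "hd p = x" "last p = y" "length p = Suc (d x y)"
    using dist_walk assms by blast
  obtain q where q: "walk V E q" "hd q = y" "last q = z" "length q = Suc (d y z)"
    using dist_walk assms by blast
  have w: "walk V E (p @ tl q)" using walk_append p q by simp
  have "hd (p @ tl q) = x" using p by (cases p) auto
  moreover have "last (p @ tl q) = z" using q p
    by (cases q; cases "tl q") (auto)
  ultimately show ?thesis using dist_le[OF w] p q by simp
qed

lemma d_edge: assumes "E x y" shows "d x y = 1"
proof -
  have "walk V E [x, y]" using assms EV by (auto simp: walk_def less_Suc_eq)
  then have "d x y \<le> 1" using dist_le by fastforce
  moreover have "d x y \<noteq> 0" using d_zero EV assms Eirr by metis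
  ultimately show ?thesis by simp
qed

end

context tr begin

lemma set_tl_sub: "x \<in> set (tl xs) \<Longrightarrow> x \<in> set xs" by (cases xs) auto

lemma last_app_tl_rev: assumes "q \<noteq> []" "r \<noteq> []" "last q = last r"
  shows "last (q @ tl (rev r)) = hd r"
proof (cases "tl (rev r) = []")
  case True
  have "length (rev r) = 1" using True assms(2) by (cases "rev r") auto
  then have "length r = 1" by simp
  then show ?thesis using True assms walk_hd_last_len1[of r] by simp
next
  case False
  then show ?thesis by (simp add: last_tl last_rev)
qed

lemma walk_drop: assumes "walk V E p" "i < length p"
  shows "walk V E (drop i p)" "hd (drop i p) = p ! i" "last (drop i p) = last p"
  using assms by (auto simp: walk_def hd_drop_conv_nth dest: in_set_dropD)

lemma walk_take: assumes "walk V E p" "0 < n"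
  shows "walk V E (take n p)"
  using assms by (auto simp: walk_def dest: in_set_takeD)

lemma d_drop: assumes "walk V E p" "last p = y" "i < length p"
  shows "d (p ! i) y \<le> length p - 1 - i"
  using dist_le[OF walk_drop(1)[OF assms(1,3)]] walk_drop[OF assms(1,3)] assms by simp

lemma shortcut: "walk V E p \<Longrightarrow> \<exists>q. walk V E q \<and> distinct q \<and> hd q = hd p \<and> last q = last p \<and> set q \<subseteq> set p"
proof (induction "length p" arbitrary: p rule: less_induct)
  case less
  show ?case
  proof (cases "distinct p")
    case True then show ?thesis using less.prems by blast
  next
    case False
    then obtain xs y ys zs where p: "p = xs @ [y] @ ys @ [y] @ zs" using not_distinct_decomp by blast
    have w1: "walk V E (xs @ [y])"
      using walk_take[OF less.prems, of "Suc (length xs)"] p by simp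
    have w2: "walk V E (y # zs)"
      using walk_drop(1)[OF less.prems, of "length xs + 1 + length ys"] p by simp
    have w: "walk V E ((xs @ [y]) @ tl (y # zs))" using walk_append[OF w1 w2] by simp
    have "length ((xs @ [y]) @ tl (y # zs)) < length p" using p by simp
    from less.hyps[OF this w] obtain q where q: "walk V E q" "distinct q"
      "hd q = hd ((xs @ [y]) @ tl (y # zs))" "last q = last ((xs @ [y]) @ tl (y # zs))"
      "set q \<subseteq> set ((xs @ [y]) @ tl (y # zs))" by blast
    moreover have "hd ((xs @ [y]) @ tl (y # zs)) = hd p" using p by (cases xs) auto
    moreover have "last ((xs @ [y]) @ tl (y # zs)) = last p" using p by (cases zs) auto
    moreover have "set ((xs @ [y]) @ tl (y # zs)) \<subseteq> set p" using p by auto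
    ultimately show ?thesis by (intro exI[of _ q]) auto
  qed
qed

lemma claimC: assumes "E a c" "E a c'" "c \<noteq> c'" "walk V E p" "hd p = c" "last p = c'" "a \<notin> set p"
  shows False
proof -
  obtain q where q: "walk V E q" "distinct q" "hd q = c" "last q = c'" "set q \<subseteq> set p"
    using shortcut[OF assms(4)] assms by blast
  have qne: "q \<noteq> []" using q walk_def by auto
  have "length q \<noteq> 1" using walk_hd_last_len1[of q] q assms(3) by auto
  then have lq: "length q \<ge> 2" using qne by (cases q) (auto simp: Suc_le_eq)
  have wac: "walk V E [a, c]" using assms(1) EV by (auto simp: walk_def less_Suc_eq)
  have "walk V E ([a, c] @ tl q)" using walk_append[OF wac q(1)] q by simp
  moreover have "[a, c] @ tl q = a # q" using q qne by (cases q) auto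
  ultimately have w: "walk V E (a # q)" by simp
  have "is_cycle V E (a # q)" unfolding is_cycle_def
    using w lq q assms qne by (auto intro: Esym)
  then show False using nocyc by blast
qed

lemma not_in_short: assumes "walk V E p" "hd p = x" "last p = y" "length p = Suc (d x y)"
  "i < length p" "0 < i" shows "p ! i \<noteq> x"
proof
  assume "p ! i = x"
  then have "d x y \<le> length p - 1 - i" using d_drop[OF assms(1,3,5)] by simp
  then show False using assms by simp
qed

lemma nxt_ex: assumes "a \<in> V" "b \<in> V" "a \<noteq> b" shows "\<exists>c. E a c \<and> Suc (d c b) = d a b"
proof -
  obtain p where p: "walk V E p" "hd p = a" "last p = b" "length p = Suc (d a b)"
    using dist_walk assms by blast
  have "d a b \<noteq> 0" using d_zero assms by blast
  then have l: "1 < length p" using p by simp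
  have e: "E a (p ! 1)" using p l by (auto simp: walk_def hd_conv_nth)
  have c: "p ! 1 \<in> V" using EV e by blast
  have "d (p ! 1) b \<le> d a b - 1" using d_drop[OF p(1) p(3) l] p by simp
  moreover have "d a b \<le> d a (p!1) + d (p!1) b" using d_tri assms c by blast
  ultimately show ?thesis using e d_edge[OF e] \<open>d a b \<noteq> 0\<close> by (intro exI[of _ "p!1"]) simp
qed

lemma avoid: assumes "walk V E p" "last p = y" "length p = Suc (d x' y)" "d x' y < d x y"
  shows "x \<notin> set p"
proof
  assume "x \<in> set p"
  then obtain i where "i < length p" "p ! i = x" by (auto simp: in_set_conv_nth)
  then show False using d_drop[OF assms(1,2), of i] assms by simp
qed

lemma nxt_uniq: assumes "b \<in> V" "E a c" "E a c'" "Suc (d c b) = d a b" "Suc (d c' b) = d a b"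
  shows "c = c'"
proof (rule ccontr)
  assume ne: "c \<noteq> c'"
  have cV: "c \<in> V" "c' \<in> V" using EV assms by auto
  obtain p where p: "walk V E p" "hd p = c" "last p = b" "length p = Suc (d c b)"
    using dist_walk assms cV by blast
  obtain q where q: "walk V E q" "hd q = c'" "last q = b" "length q = Suc (d c' b)"
    using dist_walk assms cV by blast
  have ap: "a \<notin> set p" using avoid[OF p(1,3,4)] assms by simp
  have aq: "a \<notin> set q" using avoid[OF q(1,3,4)] assms by simp
  have pne: "p \<noteq> []" "q \<noteq> []" using p q walk_def by auto
  have w: "walk V E (p @ tl (rev q))" using walk_append[OF p(1) walk_rev[OF q(1)]] p q pne
    by (simp add: hd_rev)
  have "hd (p @ tl (rev q)) = c" using p pne by simp
  moreover have "last (p @ tl (rev q)) = c'"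
    using q pne p last_app_tl_rev[of p q] by simp
  moreover have "a \<notin> set (p @ tl (rev q))" using ap aq by (auto dest: set_tl_sub)
  ultimately show False using claimC[OF assms(2,3) ne w] by blast
qed

lemma parity: assumes "E a b" "c \<in> V" shows "d a c \<noteq> d b c"
proof
  assume eq: "d a c = d b c"
  have V: "a \<in> V" "b \<in> V" using EV assms by auto
  have "a \<noteq> c"
  proof
    assume "a = c"
    then have "d b c = 0" using eq d_refl V by simp
    then show False using d_zero V assms Eirr \<open>a = c\<close> by metis
  qed
  obtain p where p: "walk V E p" "hd p = a" "last p = c" "length p = Suc (d a c)"
    using dist_walk assms V by blast
  have "d a c \<noteq> 0" using d_zero V assms \<open>a \<noteq> c\<close> by blast
  then have l: "1 < length p" using p by simp
  have e: "E a (p ! 1)" using p l by (auto simp: walk_def hd_conv_nth)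
  have c1V: "p ! 1 \<in> V" using EV e by blast
  have dc1: "d (p ! 1) c < d a c" using d_drop[OF p(1) p(3) l] p \<open>d a c \<noteq> 0\<close> by simp
  have ne: "b \<noteq> p ! 1" using dc1 eq by auto
  obtain q where q: "walk V E q" "hd q = b" "last q = c" "length q = Suc (d b c)"
    using dist_walk assms V by blast
  have aq: "a \<notin> set q"
  proof
    assume "a \<in> set q"
    then obtain i where i: "i < length q" "q ! i = a" by (auto simp: in_set_conv_nth)
    have "i \<noteq> 0" using i q assms Eirr by (metis hd_conv_nth list.size(3) not_less0)
    then show False using d_drop[OF q(1,3) i(1)] i q eq by simp
  qed
  have w1: "walk V E (drop 1 p)" "hd (drop 1 p) = p ! 1" "last (drop 1 p) = c"
    using walk_drop[OF p(1) l] p by auto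
  have ap: "a \<notin> set (drop 1 p)"
  proof
    assume "a \<in> set (drop 1 p)"
    then obtain i where i: "i < length (drop 1 p)" "drop 1 p ! i = a" by (auto simp: in_set_conv_nth)
    then have "p ! (Suc i) = a" "Suc i < length p" using l by auto
    then show False using not_in_short[OF p, of "Suc i"] by simp
  qed
  have qne: "q \<noteq> []" "drop 1 p \<noteq> []" using q walk_def l by auto
  have w: "walk V E (q @ tl (rev (drop 1 p)))"
    using walk_append[OF q(1) walk_rev[OF w1(1)]] q qne w1 by (simp add: hd_rev)
  have "hd (q @ tl (rev (drop 1 p))) = b" using q qne by simp
  moreover have "last (q @ tl (rev (drop 1 p))) = p ! 1"
    using q qne w1 last_app_tl_rev[of q "drop 1 p"] by simp
  moreover have "a \<notin> set (q @ tl (rev (drop 1 p)))" using ap aq by (auto dest: set_tl_sub)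
  ultimately show False using claimC[OF assms(1) e ne w] by blast
qed

lemma parity2: assumes "E a b" "c \<in> V" shows "d a c = Suc (d b c) \<or> d b c = Suc (d a c)"
proof -
  have V: "a \<in> V" "b \<in> V" using EV assms by auto
  have "d a c \<le> d a b + d b c" "d b c \<le> d b a + d a c" using d_tri V assms by auto
  moreover have "d a b = 1" "d b a = 1" using d_edge assms Esym by auto
  ultimately show ?thesis using parity[OF assms] by linarith
qed

end


definition ins :: "nat \<Rightarrow> 'a \<Rightarrow> 'a list \<Rightarrow> 'a list" where
  "ins i v xs = take i xs @ v # drop i xs"

lemma length_face: "i < length xs \<Longrightarrow> length (face i xs) = length xs - 1"
  by (simp add: face_def)

lemma nth_face: "i < length xs \<Longrightarrow> m < length xs - 1 \<Longrightarrow>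
  face i xs ! m = (if m < i then xs ! m else xs ! Suc m)"
  by (auto simp: face_def nth_append min_def)

lemma length_ins: "i \<le> length xs \<Longrightarrow> length (ins i v xs) = Suc (length xs)"
  by (simp add: ins_def)

lemma nth_ins: "i \<le> length xs \<Longrightarrow> m \<le> length xs \<Longrightarrow>
  ins i v xs ! m = (if m < i then xs ! m else if m = i then v else xs ! (m - 1))"
  apply (auto simp: ins_def nth_append min_def nth_Cons split: nat.split)
  apply (subgoal_tac "m - Suc 0 = i + x2")
   apply simp
  by arith

lemma face_ins: "i \<le> length xs \<Longrightarrow> face i (ins i v xs) = xs"
  by (simp add: face_def ins_def min_def)

lemma ins_face: "i < length xs \<Longrightarrow> ins i (xs ! i) (face i xs) = xs"
  by (simp add: face_def ins_def min_def Cons_nth_drop_Suc)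

lemma face_ins_comm: assumes "p \<le> i" "i < length xs"
  shows "face (Suc i) (ins p v xs) = ins p v (face i xs)"
proof (rule nth_equalityI)
  show "length (face (Suc i) (ins p v xs)) = length (ins p v (face i xs))"
    using assms by (simp add: length_face length_ins)
next
  fix m assume "m < length (face (Suc i) (ins p v xs))"
  then have m: "m < length xs" using assms by (simp add: length_face length_ins)
  show "face (Suc i) (ins p v xs) ! m = ins p v (face i xs) ! m"
    using assms m apply (simp add: nth_face nth_ins length_ins length_face)
    apply (intro conjI impI)
     apply linarith+
    done
qed

fun Lf :: "'a set \<Rightarrow> ('a \<Rightarrow> 'a \<Rightarrow> bool) \<Rightarrow> 'a list \<Rightarrow> nat" where
  "Lf V E (a # b # r) = dist V E a b + Lf V E (b # r)"
| "Lf V E _ = 0"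

lemma tlen_Lf: "tlen V E xs = Lf V E xs"
proof (induction V E xs rule: Lf.induct)
  case (1 V E a b r)
  have "tlen V E (a # b # r) = (\<Sum>i<Suc (length r). dist V E ((a # b # r) ! i) ((a # b # r) ! Suc i))"
    by (simp add: tlen_def)
  also have "\<dots> = dist V E a b + (\<Sum>i<length r. dist V E ((b # r) ! i) ((b # r) ! Suc i))"
    by (subst sum.lessThan_Suc_shift) simp
  also have "\<dots> = dist V E a b + tlen V E (b # r)" by (simp add: tlen_def)
  finally show ?case using 1 by simp
qed (auto simp: tlen_def)

lemma Lf_face: "Suc (Suc j) < length xs \<Longrightarrow>
  Lf V E (face (Suc j) xs) + dist V E (xs ! j) (xs ! Suc j) + dist V E (xs ! Suc j) (xs ! Suc (Suc j))
  = Lf V E xs + dist V E (xs ! j) (xs ! Suc (Suc j))"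
proof (induction j arbitrary: xs)
  case 0
  then show ?case
    by (cases xs; cases "tl xs"; cases "tl (tl xs)") (auto simp: face_def)
next
  case (Suc j)
  then obtain a b r where xs: "xs = a # b # r"
    by (cases xs; cases "tl xs") auto
  have f: "face (Suc (Suc j)) xs = a # face (Suc j) (b # r)" by (simp add: xs face_def)
  have "face (Suc j) (b # r) = b # face j r" by (simp add: face_def)
  then have "Lf V E (face (Suc (Suc j)) xs) = dist V E a b + Lf V E (face (Suc j) (b # r))"
    using f by simp
  moreover have "Suc (Suc j) < length (b # r)" using Suc.prems xs by simp
  ultimately show ?case using Suc.IH[of "b # r"] xs by simp
qed

context tr begin

lemma d_one_E: assumes "x \<in> V" "y \<in> V" "d x y = 1" shows "E x y"
proof -
  obtain p where p: "walk V E p" "hd p = x" "last p = y" "length p = Suc (d x y)"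
    using dist_walk assms by blast
  then have "length p = 2" using assms by simp
  then show ?thesis using p by (auto simp: walk_def hd_conv_nth last_conv_nth)
qed

definition sm :: "'a list \<Rightarrow> nat \<Rightarrow> bool" where
  "sm xs i \<longleftrightarrow> d (xs ! (i - 1)) (xs ! Suc i) = d (xs ! (i - 1)) (xs ! i) + d (xs ! i) (xs ! Suc i)"

lemma TL: assumes "set xs \<subseteq> V" "1 \<le> i" "Suc i < length xs"
  shows "tlen V E (face i xs) = tlen V E xs \<longleftrightarrow> sm xs i"
proof -
  obtain j where j: "i = Suc j" using assms by (cases i) auto
  have V: "xs ! j \<in> V" "xs ! Suc j \<in> V" "xs ! Suc (Suc j) \<in> V" using assms j by auto
  have "d (xs ! j) (xs ! Suc (Suc j)) \<le> d (xs ! j) (xs ! Suc j) + d (xs ! Suc j) (xs ! Suc (Suc j))"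
    using d_tri V by blast
  then show ?thesis using Lf_face[of j xs V E] assms j by (simp add: tlen_Lf sm_def) arith
qed

definition nx :: "'a \<Rightarrow> 'a \<Rightarrow> 'a" where
  "nx a b = (SOME c. E a c \<and> Suc (d c b) = d a b)"

lemma nx_prop: assumes "a \<in> V" "b \<in> V" "a \<noteq> b" shows "E a (nx a b)" "Suc (d (nx a b) b) = d a b"
  using someI_ex[OF nxt_ex[OF assms]] unfolding nx_def by auto

lemma nx_eq: assumes "b \<in> V" "E a c" "Suc (d c b) = d a b" shows "nx a b = c"
proof -
  have "E a (nx a b) \<and> Suc (d (nx a b) b) = d a b"
    unfolding nx_def by (rule someI[of _ c]) (use assms in auto)
  then show ?thesis using nxt_uniq[OF assms(1)] assms by blast
qed

lemma Lext: assumes "E p a" "b \<in> V" "c \<in> V" "a \<noteq> b" "d p b = Suc (d a b)" "d a c = d a b + d b c"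
  shows "d p c = Suc (d a c)"
proof (rule ccontr)
  assume "d p c \<noteq> Suc (d a c)"
  then have h: "d a c = Suc (d p c)" using parity2[OF assms(1) assms(3)] by simp
  have V: "a \<in> V" "p \<in> V" using EV assms by auto
  have n1: "nx a c = p" using nx_eq[OF assms(3) Esym[OF assms(1)] h[symmetric]] .
  define w where "w = nx a b"
  have w: "E a w" "Suc (d w b) = d a b" using nx_prop[OF V(1) assms(2,4)] w_def by auto
  have wV: "w \<in> V" using EV w by auto
  have "d w c \<le> d w b + d b c" using d_tri wV assms by blast
  moreover have "d a c \<le> d a w + d w c" using d_tri wV assms V by blast
  moreover have "d a w = 1" using d_edge w by simp
  ultimately have "Suc (d w c) = d a c" using w assms by linarith
  then have "nx a c = w" using nx_eq[OF assms(3) w(1)] by simp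
  then have "p = w" using n1 by simp
  then show False using w assms by simp
qed

end

context tr begin

definition P :: "'a list \<Rightarrow> nat \<Rightarrow> bool" where
  "P xs m \<longleftrightarrow> Suc m < length xs \<and> ((1 \<le> m \<and> sm xs m) \<or> 2 \<le> d (xs ! m) (xs ! Suc m))"

definition J :: "'a list \<Rightarrow> nat" where "J xs = (LEAST m. P xs m)"

definition caseB :: "'a list \<Rightarrow> bool" where
  "caseB xs \<longleftrightarrow> (\<exists>m. P xs m) \<and> \<not> (1 \<le> J xs \<and> sm xs (J xs))"

definition gd :: "'a list \<Rightarrow> bool" where
  "gd xs \<longleftrightarrow> set xs \<subseteq> V \<and> (\<forall>i. Suc i < length xs \<longrightarrow> xs ! i \<noteq> xs ! Suc i)"

lemma J_props: assumes "\<exists>m. P xs m" shows "P xs (J xs)" "m < J xs \<Longrightarrow> \<not> P xs m"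
  using LeastI_ex[OF assms] not_less_Least unfolding J_def by auto

lemma J_eq: assumes "P ys j" "\<And>m. m < j \<Longrightarrow> \<not> P ys m" shows "J ys = j"
  unfolding J_def using assms by (metis Least_equality not_less)

lemma agreeP: assumes "\<And>i. i \<le> j \<Longrightarrow> xs ! i = ys ! i" "j < length xs" "j < length ys" "m < j"
  shows "P xs m = P ys m"
proof -
  have "m - 1 \<le> j" "m \<le> j" "Suc m \<le> j" using assms by auto
  then show ?thesis unfolding P_def sm_def using assms by (simp add: assms(1))
qed

lemma gd_V: "gd xs \<Longrightarrow> i < length xs \<Longrightarrow> xs ! i \<in> V"
  unfolding gd_def by auto

lemma gd_pos: assumes "gd xs" "Suc i < length xs" shows "1 \<le> d (xs ! i) (xs ! Suc i)"
proof -
  have "xs ! i \<noteq> xs ! Suc i" using assms unfolding gd_def by auto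
  then show ?thesis using d_zero gd_V assms by (metis Suc_lessD less_one not_le)
qed

lemma prefix_unit: assumes "gd xs" "\<exists>m. P xs m" "m < J xs"
  shows "d (xs ! m) (xs ! Suc m) = 1"
proof -
  have "Suc (J xs) < length xs" using J_props(1)[OF assms(2)] P_def by simp
  then have l: "Suc m < length xs" using assms by simp
  have "\<not> P xs m" using J_props(2)[OF assms(2,3)] .
  then have "d (xs ! m) (xs ! Suc m) < 2" using l P_def by auto
  then show ?thesis using gd_pos[OF assms(1) l] by simp
qed

lemma prefix_nsm: assumes "\<exists>m. P xs m" "m < J xs" "1 \<le> m" shows "\<not> sm xs m"
proof -
  have "Suc (J xs) < length xs" using J_props(1)[OF assms(1)] P_def by simp
  then show ?thesis using J_props(2)[OF assms(1,2)] assms P_def by auto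
qed

lemma J_len: "\<exists>m. P xs m \<Longrightarrow> Suc (J xs) < length xs"
  using J_props(1) P_def by blast

lemma prefix_E: assumes "gd xs" "\<exists>m. P xs m" "m < J xs"
  shows "E (xs ! m) (xs ! Suc m)"
  using d_one_E prefix_unit[OF assms] gd_V[OF assms(1)] J_len[OF assms(2)] assms(3)
  by (metis Suc_lessD less_trans_Suc)

end

context tr begin

lemma caseA_face: assumes g: "gd xs" and ex: "\<exists>m. P xs m" and j: "J xs = Suc j1" and s: "sm xs (Suc j1)"
  shows "caseB (face (Suc j1) xs) \<and> J (face (Suc j1) xs) = j1 \<and>
         nx (face (Suc j1) xs ! j1) (face (Suc j1) xs ! Suc j1) = xs ! Suc j1"
proof -
  let ?y = "face (Suc j1) xs"
  have len: "Suc (Suc j1) < length xs" using J_len[OF ex] j by simp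
  have ly: "length ?y = length xs - 1" using len by (simp add: length_face)
  have y1: "?y ! m = xs ! m" if "m < Suc j1" for m using that len by (simp add: nth_face)
  have y2: "?y ! m = xs ! Suc m" if "Suc j1 \<le> m" "m < length xs - 1" for m using that len by (simp add: nth_face)
  have yj1: "?y ! j1 = xs ! j1" using y1 by simp
  have yj: "?y ! Suc j1 = xs ! Suc (Suc j1)" using y2 len by simp
  have u1: "d (xs ! j1) (xs ! Suc j1) = 1" using prefix_unit[OF g ex] j by simp
  have p2: "1 \<le> d (xs ! Suc j1) (xs ! Suc (Suc j1))" using gd_pos[OF g len] .
  have smv: "d (xs ! j1) (xs ! Suc (Suc j1)) = d (xs ! j1) (xs ! Suc j1) + d (xs ! Suc j1) (xs ! Suc (Suc j1))"
    using s by (simp add: sm_def)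
  have Py: "P ?y j1" unfolding P_def using ly len yj1 yj smv u1 p2 by simp
  have nPy: "\<not> P ?y m" if "m < j1" for m
  proof -
    have "P xs m = P ?y m" by (rule agreeP[of j1]) (use y1 len ly that in auto)
    then show ?thesis using J_props(2)[OF ex] that j by simp
  qed
  have Jy: "J ?y = j1" using J_eq[OF Py nPy] by blast
  have V: "xs ! j1 \<in> V" "xs ! Suc j1 \<in> V" "xs ! Suc (Suc j1) \<in> V" using gd_V[OF g] len by auto
  have ns: "\<not> sm ?y j1" if j1pos: "1 \<le> j1"
  proof
    assume sy: "sm ?y j1"
    obtain j2 where j2: "j1 = Suc j2" using j1pos by (cases j1) auto
    have u2: "d (xs ! j2) (xs ! j1) = 1" using prefix_unit[OF g ex, of j2] j j2 by simp
    have V2: "xs ! j2 \<in> V" using gd_V[OF g] len j2 by simp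
    have nsm: "\<not> sm xs j1" using prefix_nsm[OF ex, of j1] j j1pos by simp
    have e: "E (xs ! j1) (xs ! Suc j1)" using prefix_E[OF g ex, of j1] j by simp
    have "d (xs ! j2) (xs ! Suc j1) \<noteq> 2" using nsm u1 u2 j2 by (simp add: sm_def)
    moreover have "d (xs ! j1) (xs ! j2) = 1" using u2 d_sym V V2 by simp
    moreover have "d (xs ! Suc j1) (xs ! j2) = d (xs ! j2) (xs ! Suc j1)" using d_sym V V2 by simp
    ultimately have "d (xs ! Suc j1) (xs ! j2) = 0" using parity2[OF e V2] by auto
    then have eq: "xs ! Suc j1 = xs ! j2" using d_zero V V2 by blast
    have y2': "?y ! j2 = xs ! j2" using y1 j2 by simp
    have "d (xs ! j2) (xs ! Suc (Suc j1)) = d (xs ! j2) (xs ! j1) + d (xs ! j1) (xs ! Suc (Suc j1))"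
      using sy j2 y2' yj1 yj by (simp add: sm_def)
    then show False using eq u2 smv u1 by simp
  qed
  have cB: "caseB ?y" unfolding caseB_def using Py ns Jy by auto
  have "nx (xs ! j1) (xs ! Suc (Suc j1)) = xs ! Suc j1"
    by (rule nx_eq) (use V smv u1 prefix_E[OF g ex, of j1] j in auto)
  then show ?thesis using cB Jy yj1 yj by simp
qed

lemma caseA_other: assumes g: "gd xs" and ex: "\<exists>m. P xs m" and j: "J xs = j" and j1: "1 \<le> j"
  and s: "sm xs j" and i: "Suc j \<le> i" "Suc i < length xs" and si: "sm xs i"
  shows "\<exists>m. P (face i xs) m" "J (face i xs) = j" "sm (face i xs) j"
proof -
  let ?y = "face i xs"
  have len: "Suc j < length xs" using J_len[OF ex] j by simp
  have ly: "length ?y = length xs - 1" using i by (simp add: length_face)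
  have y1: "?y ! m = xs ! m" if "m < i" for m using that i by (simp add: nth_face)
  have y2: "?y ! m = xs ! Suc m" if "i \<le> m" "m < length xs - 1" for m using that i by (simp add: nth_face)
  have sy: "sm ?y j"
  proof (cases "i = Suc j")
    case False
    then show ?thesis using s y1 i j1 unfolding sm_def by simp
  next
    case True
    obtain j0 where j0: "j = Suc j0" using j1 by (cases j) auto
    have V: "xs ! j0 \<in> V" "xs ! j \<in> V" "xs ! Suc j \<in> V" "xs ! Suc (Suc j) \<in> V"
      using gd_V[OF g] i True j0 by auto
    have u: "d (xs ! j0) (xs ! j) = 1" using prefix_unit[OF g ex, of j0] j j0 by simp
    have e: "E (xs ! j0) (xs ! j)" using prefix_E[OF g ex, of j0] j j0 by simp
    have ne: "xs ! j \<noteq> xs ! Suc j" using g len unfolding gd_def by auto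
    have h1: "d (xs ! j0) (xs ! Suc j) = Suc (d (xs ! j) (xs ! Suc j))" using s u j0 by (simp add: sm_def)
    have h2: "d (xs ! j) (xs ! Suc (Suc j)) = d (xs ! j) (xs ! Suc j) + d (xs ! Suc j) (xs ! Suc (Suc j))"
      using si True by (simp add: sm_def)
    have "d (xs ! j0) (xs ! Suc (Suc j)) = Suc (d (xs ! j) (xs ! Suc (Suc j)))"
      using Lext[OF e V(3) V(4) ne h1 h2] .
    moreover have "?y ! j0 = xs ! j0" "?y ! j = xs ! j" "?y ! Suc j = xs ! Suc (Suc j)"
      using y1 y2 True i j0 by auto
    ultimately show ?thesis using u j0 by (simp add: sm_def)
  qed
  have Py: "P ?y j" unfolding P_def using sy j1 ly i by simp
  have nPy: "\<not> P ?y m" if "m < j" for m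
  proof -
    have "P xs m = P ?y m" by (rule agreeP[of j]) (use y1 i ly that in auto)
    then show ?thesis using J_props(2)[OF ex] that j by simp
  qed
  show "\<exists>m. P ?y m" using Py by blast
  show "J ?y = j" using J_eq[OF Py nPy] by blast
  show "sm ?y j" using sy .
qed

end

context tr begin



lemma B_basic: assumes g: "gd xs" and cb: "caseB xs" and j: "J xs = j" and v: "v = nx (xs ! j) (xs ! Suc j)"
  shows "\<exists>m. P xs m" "Suc j < length xs" "2 \<le> d (xs ! j) (xs ! Suc j)" "E (xs ! j) v" "v \<in> V"
    "Suc (d v (xs ! Suc j)) = d (xs ! j) (xs ! Suc j)" "v \<noteq> xs ! Suc j" "\<not> (1 \<le> j \<and> sm xs j)"
proof -
  show ex: "\<exists>m. P xs m" and ns: "\<not> (1 \<le> j \<and> sm xs j)" using cb j caseB_def by auto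
  show len: "Suc j < length xs" using J_len[OF ex] j by simp
  show d2: "2 \<le> d (xs ! j) (xs ! Suc j)" using J_props(1)[OF ex] j ns P_def by auto
  have V: "xs ! j \<in> V" "xs ! Suc j \<in> V" using gd_V[OF g] len by auto
  have ne: "xs ! j \<noteq> xs ! Suc j" using d2 d_refl V by auto
  show e: "E (xs ! j) v" and dv: "Suc (d v (xs ! Suc j)) = d (xs ! j) (xs ! Suc j)"
    using nx_prop[OF V ne] v by auto
  show "v \<in> V" using EV e by blast
  show "v \<noteq> xs ! Suc j" using dv d2 d_refl V by auto
qed

lemma B_prev: assumes g: "gd xs" and cb: "caseB xs" and j: "J xs = Suc j0" and v: "v = nx (xs ! Suc j0) (xs ! Suc (Suc j0))"
  shows "xs ! j0 = v"
proof -
  note b = B_basic[OF g cb j v]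
  have V: "xs ! j0 \<in> V" "xs ! Suc j0 \<in> V" "xs ! Suc (Suc j0) \<in> V" using gd_V[OF g] b(2) by auto
  have e: "E (xs ! Suc j0) (xs ! j0)" using prefix_E[OF g b(1), of j0] j Esym by simp
  have u: "d (xs ! j0) (xs ! Suc j0) = 1" using prefix_unit[OF g b(1), of j0] j by simp
  have "\<not> sm xs (Suc j0)" using b(8) by simp
  then have "d (xs ! j0) (xs ! Suc (Suc j0)) \<noteq> Suc (d (xs ! Suc j0) (xs ! Suc (Suc j0)))"
    using u by (simp add: sm_def)
  then have "d (xs ! Suc j0) (xs ! Suc (Suc j0)) = Suc (d (xs ! j0) (xs ! Suc (Suc j0)))"
    using parity2[OF e V(3)] by auto
  then show ?thesis using nx_eq[OF V(3) e] v by simp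
qed

lemma B1: assumes g: "gd xs" and cb: "caseB xs" and j: "J xs = j" and i: "1 \<le> i" "i \<le> j"
  shows "\<not> sm xs i"
proof (cases "i = j")
  case True then show ?thesis using cb j i caseB_def by auto
next
  case False
  have ex: "\<exists>m. P xs m" using cb caseB_def by auto
  then show ?thesis using prefix_nsm[OF ex, of i] False i j by simp
qed

lemma B2: assumes g: "gd xs" and cb: "caseB xs" and j: "J xs = j" and v: "v = nx (xs ! j) (xs ! Suc j)"
  and i: "Suc j \<le> i" "Suc i < length xs" and si: "sm xs i"
  shows "caseB (face i xs)" "J (face i xs) = j" "nx (face i xs ! j) (face i xs ! Suc j) = v"
proof -
  note b = B_basic[OF g cb j v]
  let ?y = "face i xs"
  have ly: "length ?y = length xs - 1" using i by (simp add: length_face)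
  have y1: "?y ! m = xs ! m" if "m < i" for m using that i by (simp add: nth_face)
  have y2: "?y ! m = xs ! Suc m" if "i \<le> m" "m < length xs - 1" for m using that i by (simp add: nth_face)
  have V: "xs ! j \<in> V" "xs ! Suc j \<in> V" using gd_V[OF g] b(2) by auto
  have main: "2 \<le> d (?y ! j) (?y ! Suc j) \<and> \<not> (1 \<le> j \<and> sm ?y j) \<and> nx (?y ! j) (?y ! Suc j) = v"
  proof (cases "i = Suc j")
    case False
    then show ?thesis using b(3,8) y1 i v unfolding sm_def by simp
  next
    case True
    have V2: "xs ! Suc (Suc j) \<in> V" using gd_V[OF g] i True by auto
    have yy: "?y ! j = xs ! j" "?y ! Suc j = xs ! Suc (Suc j)" using y1 y2 True i by auto
    have h2: "d (xs ! j) (xs ! Suc (Suc j)) = d (xs ! j) (xs ! Suc j) + d (xs ! Suc j) (xs ! Suc (Suc j))"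
      using si True by (simp add: sm_def)
    have t1: "d v (xs ! Suc (Suc j)) \<le> d v (xs ! Suc j) + d (xs ! Suc j) (xs ! Suc (Suc j))"
      using d_tri b(5) V V2 by blast
    have t2: "d (xs ! j) (xs ! Suc (Suc j)) \<le> d (xs ! j) v + d v (xs ! Suc (Suc j))"
      using d_tri b(5) V V2 by blast
    have dv1: "d (xs ! j) v = 1" using d_edge b(4) .
    have dd: "Suc (d v (xs ! Suc (Suc j))) = d (xs ! j) (xs ! Suc (Suc j))"
      using t1 t2 dv1 h2 b(6) by linarith
    have nxe: "nx (xs ! j) (xs ! Suc (Suc j)) = v" using nx_eq[OF V2 b(4) dd] .
    have nsm: "\<not> (1 \<le> j \<and> sm ?y j)"
    proof
      assume a: "1 \<le> j \<and> sm ?y j"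
      then obtain j0 where j0: "j = Suc j0" by (cases j) auto
      have xv: "xs ! j0 = v" using B_prev[OF g cb] j j0 v by simp
      have "?y ! j0 = xs ! j0" using y1 True j0 by simp
      then have "d v (xs ! Suc (Suc j)) = d v (xs ! j) + d (xs ! j) (xs ! Suc (Suc j))"
        using a yy xv j0 by (simp add: sm_def)
      then show False using dd by simp
    qed
    show ?thesis using yy h2 b(3) nsm nxe by simp
  qed
  have Py: "P ?y j" unfolding P_def using main ly i by simp
  have nPy: "\<not> P ?y m" if "m < j" for m
  proof -
    have "P xs m = P ?y m" by (rule agreeP[of j]) (use y1 i ly that in auto)
    then show ?thesis using J_props(2)[OF b(1)] that j by simp
  qed
  show Jy: "J ?y = j" using J_eq[OF Py nPy] by blast
  show "caseB ?y" unfolding caseB_def using Py Jy main by auto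
  show "nx (?y ! j) (?y ! Suc j) = v" using main by simp
qed

lemma B3: assumes g: "gd xs" and cb: "caseB xs" and j: "J xs = j" and v: "v = nx (xs ! j) (xs ! Suc j)"
  shows "\<And>i. 1 \<le> i \<Longrightarrow> i \<le> j \<Longrightarrow> \<not> sm (ins (Suc j) v xs) i"
    "sm (ins (Suc j) v xs) (Suc j)"
    "\<And>i. Suc (Suc j) \<le> i \<Longrightarrow> Suc i < length (ins (Suc j) v xs) \<Longrightarrow> sm (ins (Suc j) v xs) i = sm xs (i - 1)"
    "gd (ins (Suc j) v xs)"
    "tlen V E (ins (Suc j) v xs) = tlen V E xs"
    "length (ins (Suc j) v xs) = Suc (length xs)"
proof -
  note b = B_basic[OF g cb j v]
  let ?x = "ins (Suc j) v xs"
  have lx: "length ?x = Suc (length xs)" using b(2) by (simp add: length_ins)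
  then show "length ?x = Suc (length xs)" .
  have x1: "?x ! m = xs ! m" if "m \<le> j" for m using that b(2) by (simp add: nth_ins)
  have x2: "?x ! Suc j = v" using b(2) by (simp add: nth_ins)
  have x3: "?x ! m = xs ! (m - 1)" if "Suc (Suc j) \<le> m" "m \<le> length xs" for m
    using that b(2) by (simp add: nth_ins)
  have V: "xs ! j \<in> V" "xs ! Suc j \<in> V" using gd_V[OF g] b(2) by auto
  have dv1: "d (xs ! j) v = 1" using d_edge b(4) .
  show "\<not> sm ?x i" if i1: "1 \<le> i" and ij: "i \<le> j" for i
  proof (cases "i = j")
    case False
    then have "sm ?x i = sm xs i" using x1 that unfolding sm_def by simp
    then show ?thesis using B1[OF g cb j, of i] that by simp
  next
    case True
    then obtain j0 where j0: "j = Suc j0" using i1 by (cases j) auto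
    have xv: "xs ! j0 = v" using B_prev[OF g cb] j j0 v by simp
    have "?x ! j0 = v" using x1 xv j0 by simp
    then show ?thesis using True x1 x2 j0 xv dv1 d_refl b(5) d_sym V by (simp add: sm_def)
  qed
  show smj: "sm ?x (Suc j)" using x1 x2 x3[of "Suc (Suc j)"] b(2) dv1 b(6) by (simp add: sm_def)
  show "sm ?x i = sm xs (i - 1)" if "Suc (Suc j) \<le> i" "Suc i < length ?x" for i
  proof (cases "i = Suc (Suc j)")
    case False
    then show ?thesis using x3 that lx unfolding sm_def by simp
  next
    case True
    have V2: "xs ! Suc (Suc j) \<in> V" using gd_V[OF g] that True lx by auto
    have xx: "?x ! Suc j = v" "?x ! Suc (Suc j) = xs ! Suc j" "?x ! Suc (Suc (Suc j)) = xs ! Suc (Suc j)"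
      using x2 x3 that True lx by auto
    have t1: "d v (xs ! Suc (Suc j)) \<le> d v (xs ! Suc j) + d (xs ! Suc j) (xs ! Suc (Suc j))"
      using d_tri b(5) V V2 by blast
    have t2: "d (xs ! j) (xs ! Suc (Suc j)) \<le> d (xs ! j) v + d v (xs ! Suc (Suc j))"
      using d_tri b(5) V V2 by blast
    have "d v (xs ! Suc (Suc j)) = d v (xs ! Suc j) + d (xs ! Suc j) (xs ! Suc (Suc j)) \<longleftrightarrow>
      d (xs ! j) (xs ! Suc (Suc j)) = d (xs ! j) (xs ! Suc j) + d (xs ! Suc j) (xs ! Suc (Suc j))"
    proof
      assume h: "d v (xs ! Suc (Suc j)) = d v (xs ! Suc j) + d (xs ! Suc j) (xs ! Suc (Suc j))"
      have "d (xs ! j) (xs ! Suc (Suc j)) = Suc (d v (xs ! Suc (Suc j)))"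
        using Lext[OF b(4) V(2) V2 b(7) b(6)[symmetric] h] .
      then show "d (xs ! j) (xs ! Suc (Suc j)) = d (xs ! j) (xs ! Suc j) + d (xs ! Suc j) (xs ! Suc (Suc j))"
        using h b(6) by simp
    next
      assume "d (xs ! j) (xs ! Suc (Suc j)) = d (xs ! j) (xs ! Suc j) + d (xs ! Suc j) (xs ! Suc (Suc j))"
      then show "d v (xs ! Suc (Suc j)) = d v (xs ! Suc j) + d (xs ! Suc j) (xs ! Suc (Suc j))"
        using t1 t2 dv1 b(6) by linarith
    qed
    then show ?thesis using True xx by (simp add: sm_def)
  qed
  show gx: "gd ?x" unfolding gd_def
  proof (intro conjI allI impI)
    show "set ?x \<subseteq> V" using g b(5) unfolding gd_def ins_def
      by (auto dest: in_set_takeD in_set_dropD)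
    fix i assume i: "Suc i < length ?x"
    show "?x ! i \<noteq> ?x ! Suc i"
    proof -
      consider "Suc i \<le> j" | "i = j" | "i = Suc j" | "Suc (Suc j) \<le> i" by linarith
      then show ?thesis
      proof cases
        case 1 then show ?thesis using x1 g i lx b(2) unfolding gd_def by simp
      next
        case 2 then show ?thesis using x1 x2 b(4) Eirr by auto
      next
        case 3 then show ?thesis using x2 x3[of "Suc (Suc j)"] b(2) b(7) by simp
      next
        case 4
        have "?x ! i = xs ! (i - 1)" "?x ! Suc i = xs ! Suc (i - 1)" using x3 i lx 4 by auto
        moreover have "Suc (i - 1) < length xs" using i lx 4 by simp
        ultimately show ?thesis using g unfolding gd_def by simp
      qed
    qed
  qed
  have "tlen V E (face (Suc j) ?x) = tlen V E ?x" using TL[of ?x "Suc j"] gx smj lx b(2) gd_def by simp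
  then show "tlen V E ?x = tlen V E xs" using face_ins[of "Suc j" xs v] b(2) by simp
qed

end


definition supp :: "('b \<Rightarrow> int) \<Rightarrow> 'b set" where "supp c = {x. c x \<noteq> 0}"
definition gen :: "'b \<Rightarrow> 'b \<Rightarrow> int" where "gen x = (\<lambda>y. if y = x then 1 else 0)"
definition lin :: "('b \<Rightarrow> 'c \<Rightarrow> int) \<Rightarrow> ('b \<Rightarrow> int) \<Rightarrow> 'c \<Rightarrow> int" where
  "lin f c = (\<lambda>z. \<Sum>x\<in>supp c. c x * f x z)"

lemma lin_superset: assumes "finite T" "supp c \<subseteq> T" shows "lin f c z = (\<Sum>x\<in>T. c x * f x z)"
  unfolding lin_def by (rule sum.mono_neutral_left) (use assms in \<open>auto simp: supp_def\<close>)

lemma sum_nz: "(\<Sum>i\<in>S. g i) \<noteq> (0::int) \<Longrightarrow> \<exists>i\<in>S. g i \<noteq> 0"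
  by (meson sum.neutral)

lemma lin_comb: assumes "finite S" "\<And>i. i \<in> S \<Longrightarrow> finite (supp (F i))"
  shows "lin f (\<lambda>y. \<Sum>i\<in>S. a i * F i y) z = (\<Sum>i\<in>S. a i * lin f (F i) z)"
proof -
  let ?T = "\<Union>i\<in>S. supp (F i)"
  have fT: "finite ?T" using assms by auto
  have "supp (\<lambda>y. \<Sum>i\<in>S. a i * F i y) \<subseteq> ?T"
  proof
    fix y assume "y \<in> supp (\<lambda>y. \<Sum>i\<in>S. a i * F i y)"
    then have "(\<Sum>i\<in>S. a i * F i y) \<noteq> 0" by (simp add: supp_def)
    then obtain i where i: "i \<in> S" "a i * F i y \<noteq> 0" using sum_nz by blast
    then have "y \<in> supp (F i)" by (simp add: supp_def)
    then show "y \<in> ?T" using i by blast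
  qed
  then have "lin f (\<lambda>y. \<Sum>i\<in>S. a i * F i y) z = (\<Sum>x\<in>?T. (\<Sum>i\<in>S. a i * F i x) * f x z)"
    by (rule lin_superset[OF fT])
  also have "\<dots> = (\<Sum>x\<in>?T. \<Sum>i\<in>S. a i * (F i x * f x z))"
    by (simp add: sum_distrib_right mult.assoc)
  also have "\<dots> = (\<Sum>i\<in>S. \<Sum>x\<in>?T. a i * (F i x * f x z))"
    by (rule sum.swap)
  also have "\<dots> = (\<Sum>i\<in>S. a i * lin f (F i) z)"
  proof (rule sum.cong[OF refl])
    fix i assume i: "i \<in> S"
    have "supp (F i) \<subseteq> ?T" using i by blast
    then have "lin f (F i) z = (\<Sum>x\<in>?T. F i x * f x z)" by (rule lin_superset[OF fT])
    then show "(\<Sum>x\<in>?T. a i * (F i x * f x z)) = a i * lin f (F i) z" by (simp add: sum_distrib_left)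
  qed
  finally show ?thesis .
qed

lemma supp_gen: "supp (gen x) = {x}" by (auto simp: supp_def gen_def)

lemma lin_gen: "lin f (gen x) z = f x z"
  unfolding lin_def supp_gen by (simp add: gen_def)

lemma lin_scale_gen: "lin f (\<lambda>y. s * gen x y) z = s * f x z"
proof (cases "s = 0")
  case True then show ?thesis by (simp add: lin_def supp_def)
next
  case False
  then have "supp (\<lambda>y. s * gen x y) = {x}" by (auto simp: supp_def gen_def)
  then show ?thesis by (simp add: lin_def gen_def)
qed

lemma lin_zero: "lin f (\<lambda>_. 0) z = 0" by (simp add: lin_def supp_def)

lemma lin_compose: assumes "finite (supp c)" "\<And>x. x \<in> supp c \<Longrightarrow> finite (supp (f x))"
  shows "lin g (lin f c) z = lin (\<lambda>x. lin g (f x)) c z"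
proof -
  have "lin f c = (\<lambda>y. \<Sum>x\<in>supp c. c x * f x y)" by (simp add: lin_def)
  then have "lin g (lin f c) z = (\<Sum>x\<in>supp c. c x * lin g (f x) z)"
    using lin_comb[OF assms, where f=g and a=c and z=z] by simp
  then show ?thesis by (simp add: lin_def)
qed

lemma lin_gen_sum: assumes "finite (supp c)" shows "lin gen c z = c z"
proof -
  have "lin gen c z = (\<Sum>x\<in>supp c. if z = x then c x else 0)"
    unfolding lin_def gen_def by (intro sum.cong) auto
  also have "\<dots> = (if z \<in> supp c then c z else 0)" using assms by simp
  also have "\<dots> = c z" by (simp add: supp_def)
  finally show ?thesis .
qed

definition bdg :: "'a set \<Rightarrow> ('a \<Rightarrow> 'a \<Rightarrow> bool) \<Rightarrow> nat \<Rightarrow> 'a list \<Rightarrow> 'a list \<Rightarrow> int" where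
  "bdg V E k xs = (\<lambda>ys. \<Sum>i\<in>{1..<k}. if tlen V E (face i xs) = tlen V E xs \<and> face i xs = ys then (-1)^i else 0)"

lemma bd_lin: "bd V E k l c = lin (bdg V E k) c"
  by (simp add: bd_def lin_def supp_def bdg_def)

lemma bdg_comb: "bdg V E k xs = (\<lambda>z. \<Sum>i\<in>{1..<k}. (if tlen V E (face i xs) = tlen V E xs then (-1)^i else 0) * gen (face i xs) z)"
  unfolding bdg_def gen_def by (intro ext sum.cong) auto

lemma bdg_fin: "finite (supp (bdg V E k xs))"
proof -
  have "supp (bdg V E k xs) \<subseteq> (\<lambda>i. face i xs) ` {1..<k}"
  proof
    fix z assume "z \<in> supp (bdg V E k xs)"
    then have "(\<Sum>i\<in>{1..<k}. if tlen V E (face i xs) = tlen V E xs \<and> face i xs = z then (-1::int)^i else 0) \<noteq> 0"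
      by (simp add: supp_def bdg_def)
    then obtain i where i: "i \<in> {1..<k}" "(if tlen V E (face i xs) = tlen V E xs \<and> face i xs = z then (-1::int)^i else 0) \<noteq> 0"
      using sum_nz by blast
    then have "face i xs = z" by (simp split: if_splits)
    then show "z \<in> (\<lambda>i. face i xs) ` {1..<k}" using i(1) by blast
  qed
  then show ?thesis by (rule finite_subset) simp
qed


context tr begin

definition hh :: "'a list \<Rightarrow> 'a list \<Rightarrow> int" where
  "hh xs = (if caseB xs then (\<lambda>z. (-1)^(Suc (J xs)) * gen (ins (Suc (J xs)) (nx (xs ! J xs) (xs ! Suc (J xs))) xs) z)
            else (\<lambda>_. 0))"

lemma hh_fin: "finite (supp (hh xs))"
proof -
  have "supp (hh xs) \<subseteq> {ins (Suc (J xs)) (nx (xs ! J xs) (xs ! Suc (J xs))) xs}"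
    by (auto simp: hh_def supp_def gen_def split: if_splits)
  then show ?thesis by (rule finite_subset) simp
qed

lemma neg1sq: "(-1::int)^n * (-1)^n = 1"
  by (simp add: power_mult_distrib[symmetric])

lemma Igen_gd: assumes "xs \<in> Igen V E k l" shows "gd xs" "length xs = Suc k" "tlen V E xs = l"
  using assms unfolding Igen_def gd_def by auto

lemma Igen_ge: assumes "xs \<in> Igen V E k l" shows "k \<le> l"
proof -
  have g: "gd xs" and len: "length xs = Suc k" and t: "tlen V E xs = l" using Igen_gd[OF assms] by auto
  have "(\<Sum>i<k. (1::nat)) \<le> (\<Sum>i<k. d (xs ! i) (xs ! Suc i))"
    by (rule sum_mono) (use gd_pos[OF g] len in auto)
  then show ?thesis using t len by (simp add: tlen_def)
qed

lemma Igen_P: assumes "xs \<in> Igen V E k l" "k \<noteq> l" shows "\<exists>m. P xs m"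
proof (rule ccontr)
  assume nP: "\<not> (\<exists>m. P xs m)"
  have g: "gd xs" and len: "length xs = Suc k" and t: "tlen V E xs = l" using Igen_gd[OF assms(1)] by auto
  have "(\<Sum>i<k. d (xs ! i) (xs ! Suc i)) = (\<Sum>i<k. (1::nat))"
  proof (rule sum.cong[OF refl])
    fix i assume "i \<in> {..<k}"
    then have i: "Suc i < length xs" using len by simp
    then have "d (xs ! i) (xs ! Suc i) < 2" using nP P_def by auto
    then show "d (xs ! i) (xs ! Suc i) = 1" using gd_pos[OF g i] by simp
  qed
  then show False using t len assms(2) by (simp add: tlen_def)
qed

lemma S2: assumes "xs \<in> Igen V E k l"
  shows "lin hh (bdg V E k xs) z = (\<Sum>i\<in>{1..<k}. (if sm xs i then (-1)^i else 0) * hh (face i xs) z)"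
proof -
  have g: "gd xs" and len: "length xs = Suc k" using Igen_gd[OF assms] by auto
  have "lin hh (bdg V E k xs) z = (\<Sum>i\<in>{1..<k}. (if tlen V E (face i xs) = tlen V E xs then (-1)^i else 0) * lin hh (gen (face i xs)) z)"
    unfolding bdg_comb by (rule lin_comb) (auto simp: supp_gen)
  also have "\<dots> = (\<Sum>i\<in>{1..<k}. (if sm xs i then (-1)^i else 0) * hh (face i xs) z)"
  proof (rule sum.cong[OF refl])
    fix i assume i: "i \<in> {1..<k}"
    have "tlen V E (face i xs) = tlen V E xs \<longleftrightarrow> sm xs i"
      by (rule TL) (use g i len in \<open>auto simp: gd_def\<close>)
    then show "(if tlen V E (face i xs) = tlen V E xs then (-1)^i else 0) * lin hh (gen (face i xs)) z
      = (if sm xs i then (-1)^i else 0) * hh (face i xs) z" by (simp add: lin_gen)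
  qed
  finally show ?thesis .
qed

lemma GenA: assumes xs: "xs \<in> Igen V E k l" and ex: "\<exists>m. P xs m" and ncb: "\<not> caseB xs"
  shows "lin (bdg V E (Suc k)) (hh xs) z + lin hh (bdg V E k xs) z = gen xs z"
proof -
  have g: "gd xs" and len: "length xs = Suc k" using Igen_gd[OF xs] by auto
  define j where "j = J xs"
  have jj: "1 \<le> j" "sm xs j" using ncb ex unfolding caseB_def j_def by auto
  obtain j1 where j1: "j = Suc j1" using jj by (cases j) auto
  have jl: "Suc j < length xs" using J_len[OF ex] j_def by simp
  have h0: "hh xs = (\<lambda>_. 0)" using ncb by (simp add: hh_def)
  let ?t = "\<lambda>i. (if sm xs i then (-1)^i else 0) * hh (face i xs) z"
  have jin: "j \<in> {1..<k}" using jj jl len by simp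
  have rest: "sum ?t ({1..<k} - {j}) = 0"
  proof (rule sum.neutral, rule ballI)
    fix i assume i: "i \<in> {1..<k} - {j}"
    show "?t i = 0"
    proof (cases "i < j")
      case True
      then have "\<not> sm xs i" using prefix_nsm[OF ex, of i] i j_def by simp
      then show ?thesis by simp
    next
      case False
      show ?thesis
      proof (cases "sm xs i")
        case True
        have "Suc j \<le> i" using False i by auto
        note c = caseA_other[OF g ex j_def[symmetric] jj(1) jj(2) this _ True]
        have "\<not> caseB (face i xs)" using c i len jj unfolding caseB_def by auto
        then show ?thesis by (simp add: hh_def)
      qed simp
    qed
  qed
  have cA: "caseB (face j xs) \<and> J (face j xs) = j1 \<and> nx (face j xs ! j1) (face j xs ! Suc j1) = xs ! Suc j1"
    using caseA_face[OF g ex, of j1] j_def j1 jj by simp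
  have "hh (face j xs) z = (-1)^j * gen xs z"
    using cA ins_face[of "Suc j1" xs] jl j1 by (simp add: hh_def)
  then have tj: "?t j = gen xs z" using jj by (simp add: mult.assoc[symmetric] neg1sq)
  have "lin hh (bdg V E k xs) z = sum ?t {1..<k}" using S2[OF xs] by simp
  also have "\<dots> = ?t j + sum ?t ({1..<k} - {j})" using jin by (simp add: sum.remove)
  finally show ?thesis using tj rest h0 lin_zero by simp
qed

lemma GenB: assumes xs: "xs \<in> Igen V E k l" and cb: "caseB xs"
  shows "lin (bdg V E (Suc k)) (hh xs) z + lin hh (bdg V E k xs) z = gen xs z"
proof -
  have g: "gd xs" and len: "length xs = Suc k" using Igen_gd[OF xs] by auto
  define j where "j = J xs"
  define v where "v = nx (xs ! j) (xs ! Suc j)"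
  define x' where "x' = ins (Suc j) v xs"
  note b = B_basic[OF g cb j_def[symmetric] v_def]
  note b3 = B3[OF g cb j_def[symmetric] v_def, folded x'_def]
  have jk: "j < k" using b(2) len by simp
  have hx: "hh xs = (\<lambda>z. (-1)^(Suc j) * gen x' z)" using cb by (simp add: hh_def j_def v_def x'_def)
  define G where "G i = gen (ins (Suc j) v (face i xs)) z" for i
  have "lin (bdg V E (Suc k)) (hh xs) z = (-1)^(Suc j) * bdg V E (Suc k) x' z"
    unfolding hx by (rule lin_scale_gen)
  also have "bdg V E (Suc k) x' z = (\<Sum>i\<in>{1..<Suc k}. (if sm x' i then (-1)^i else 0) * gen (face i x') z)"
    unfolding bdg_comb
  proof (rule sum.cong[OF refl])
    fix i assume i: "i \<in> {1..<Suc k}"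
    have "tlen V E (face i x') = tlen V E x' \<longleftrightarrow> sm x' i"
      by (rule TL) (use b3(4) b3(6) i len in \<open>auto simp: gd_def\<close>)
    then show "(if tlen V E (face i x') = tlen V E x' then (-1)^i else 0) * gen (face i x') z
      = (if sm x' i then (-1)^i else 0) * gen (face i x') z" by simp
  qed
  also have "(\<Sum>i\<in>{1..<Suc k}. (if sm x' i then (-1)^i else 0) * gen (face i x') z)
     = (-1)^(Suc j) * gen xs z + (\<Sum>i\<in>{Suc j..<k}. (if sm xs i then (-1)^(Suc i) else 0) * G i)"
  proof -
    let ?t = "\<lambda>i. (if sm x' i then (-1::int)^i else 0) * gen (face i x') z"
    have le: "1 \<le> Suc j" "Suc j \<le> Suc k" using jk by auto
    have "sum ?t {1..<Suc k} = sum ?t {1..<Suc j} + sum ?t {Suc j..<Suc k}"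
      using sum.atLeastLessThan_concat[OF le, of ?t] by (rule sym)
    moreover have "sum ?t {1..<Suc j} = 0" using b3(1) by (intro sum.neutral) auto
    moreover have "sum ?t {Suc j..<Suc k} = ?t (Suc j) + sum ?t {Suc (Suc j)..<Suc k}"
      by (rule sum.atLeast_Suc_lessThan) (use jk in simp)
    moreover have "?t (Suc j) = (-1)^(Suc j) * gen xs z"
      using b3(2) face_ins[of "Suc j" xs v] b(2) x'_def by simp
    moreover have "sum ?t {Suc (Suc j)..<Suc k} = sum (\<lambda>i. ?t (Suc i)) {Suc j..<k}"
      by (rule sum.shift_bounds_Suc_ivl)
    moreover have "sum (\<lambda>i. ?t (Suc i)) {Suc j..<k} = (\<Sum>i\<in>{Suc j..<k}. (if sm xs i then (-1)^(Suc i) else 0) * G i)"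
    proof (rule sum.cong[OF refl])
      fix i assume i: "i \<in> {Suc j..<k}"
      have "sm x' (Suc i) = sm xs i" using b3(3)[of "Suc i"] b3(6) i len by simp
      moreover have "face (Suc i) x' = ins (Suc j) v (face i xs)"
        unfolding x'_def by (rule face_ins_comm) (use i len in auto)
      ultimately show "?t (Suc i) = (if sm xs i then (-1)^(Suc i) else 0) * G i" by (simp add: G_def)
    qed
    ultimately show ?thesis by simp
  qed
  finally have T1: "lin (bdg V E (Suc k)) (hh xs) z = (-1)^(Suc j) * ((-1)^(Suc j) * gen xs z
      + (\<Sum>i\<in>{Suc j..<k}. (if sm xs i then (-1)^(Suc i) else 0) * G i))" .
  let ?t = "\<lambda>i. (if sm xs i then (-1)^i else 0) * hh (face i xs) z"
  have "lin hh (bdg V E k xs) z = sum ?t {1..<k}" using S2[OF xs] by simp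
  also have "\<dots> = sum ?t {1..<Suc j} + sum ?t {Suc j..<k}"
    by (rule sum.atLeastLessThan_concat[symmetric]) (use jk in auto)
  also have "sum ?t {1..<Suc j} = 0" using B1[OF g cb j_def[symmetric]] by (intro sum.neutral) auto
  also have "sum ?t {Suc j..<k} = (\<Sum>i\<in>{Suc j..<k}. (if sm xs i then (-1)^i * (-1)^(Suc j) else 0) * G i)"
  proof (rule sum.cong[OF refl])
    fix i assume i: "i \<in> {Suc j..<k}"
    show "?t i = (if sm xs i then (-1)^i * (-1)^(Suc j) else 0) * G i"
    proof (cases "sm xs i")
      case True
      note c = B2[OF g cb j_def[symmetric] v_def, of i]
      have "hh (face i xs) z = (-1)^(Suc j) * G i" using c i len True by (simp add: hh_def G_def)
      then show ?thesis using True by simp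
    qed simp
  qed
  finally have T2: "lin hh (bdg V E k xs) z = (\<Sum>i\<in>{Suc j..<k}. (if sm xs i then (-1)^i * (-1)^(Suc j) else 0) * G i)"
    by simp
  define sg :: int where "sg = (-1)^(Suc j)"
  define A where "A = (\<Sum>i\<in>{Suc j..<k}. (if sm xs i then (-1)^(Suc i) else 0) * G i)"
  define B where "B = (\<Sum>i\<in>{Suc j..<k}. (if sm xs i then (-1)^i * (-1)^(Suc j) else 0) * G i)"
  have Z: "sg * A + B = 0" unfolding sg_def A_def B_def
    unfolding sum_distrib_left sum.distrib[symmetric] by (intro sum.neutral) auto
  have H: "\<And>(s::int) g A B. s * (s * g + A) + B = (s * s) * g + (s * A + B)"
    by (simp add: algebra_simps)
  have "lin (bdg V E (Suc k)) (hh xs) z + lin hh (bdg V E k xs) z = sg * (sg * gen xs z + A) + B"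
    using T1 T2 unfolding sg_def A_def B_def by simp
  also have "\<dots> = (sg * sg) * gen xs z + (sg * A + B)" by (rule H)
  also have "\<dots> = gen xs z" using Z neg1sq[of "Suc j"] unfolding sg_def by simp
  finally show ?thesis .
qed

lemma GenId: assumes xs: "xs \<in> Igen V E k l" and ex: "\<exists>m. P xs m"
  shows "lin (bdg V E (Suc k)) (hh xs) z + lin hh (bdg V E k xs) z = gen xs z"
  using GenA[OF xs ex] GenB[OF xs] by blast

end

context tr begin

lemma lin_apply: "lin f c z = (\<Sum>x\<in>supp c. c x * f x z)" by (simp add: lin_def)

lemma hh_target: assumes xs: "xs \<in> Igen V E k l" and h: "hh xs z \<noteq> 0"
  shows "z \<in> Igen V E (Suc k) l"
proof -
  have g: "gd xs" and len: "length xs = Suc k" and t: "tlen V E xs = l" using Igen_gd[OF xs] by auto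
  have cb: "caseB xs" using h by (simp add: hh_def split: if_splits)
  define j where "j = J xs"
  define v where "v = nx (xs ! j) (xs ! Suc j)"
  have z: "z = ins (Suc j) v xs" using h cb by (simp add: hh_def gen_def j_def v_def split: if_splits)
  note b3 = B3[OF g cb j_def[symmetric] v_def]
  show ?thesis unfolding Igen_def using b3(4,5,6) z len t by (auto simp: gd_def)
qed

lemma MHz: assumes "k \<noteq> l" shows "MH_zero V E k l"
  unfolding MH_zero_def
proof (intro ballI impI)
  fix c assume cM: "c \<in> MC V E k l" and bc: "bd V E k l c = (\<lambda>_. 0)"
  have fc: "finite (supp c)" using cM by (simp add: MC_def supp_def)
  have cI: "x \<in> Igen V E k l" if "x \<in> supp c" for x using cM that by (simp add: MC_def supp_def)
  show "\<exists>b\<in>MC V E (Suc k) l. bd V E (Suc k) l b = c"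
  proof (cases "l < k")
    case True
    have c0: "c = (\<lambda>_. 0)"
    proof
      fix x show "c x = 0"
      proof (rule ccontr)
        assume "c x \<noteq> 0"
        then have "x \<in> Igen V E k l" using cI by (simp add: supp_def)
        then show False using Igen_ge True by fastforce
      qed
    qed
    have "(\<lambda>_. 0) \<in> MC V E (Suc k) l" by (simp add: MC_def)
    moreover have "bd V E (Suc k) l (\<lambda>_. 0) = c" using c0 by (simp add: bd_def)
    ultimately show ?thesis by blast
  next
    case False
    define b where "b = lin hh c"
    have bz: "b z \<noteq> 0 \<Longrightarrow> \<exists>x\<in>supp c. hh x z \<noteq> 0" for z
      unfolding b_def lin_def using sum_nz by fastforce
    have "finite {z. b z \<noteq> 0}"
    proof (rule finite_subset)
      show "{z. b z \<noteq> 0} \<subseteq> (\<Union>x\<in>supp c. supp (hh x))" using bz by (auto simp: supp_def)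
      show "finite (\<Union>x\<in>supp c. supp (hh x))" using fc hh_fin by blast
    qed
    moreover have "\<forall>z. b z \<noteq> 0 \<longrightarrow> z \<in> Igen V E (Suc k) l"
      using bz hh_target cI by blast
    ultimately have bM: "b \<in> MC V E (Suc k) l" by (simp add: MC_def)
    have "bd V E (Suc k) l b z = c z" for z
    proof -
      have "bd V E (Suc k) l b z = lin (\<lambda>x. lin (bdg V E (Suc k)) (hh x)) c z"
        unfolding bd_lin b_def using lin_compose[of c hh "bdg V E (Suc k)" z] fc hh_fin by simp
      also have "\<dots> = (\<Sum>x\<in>supp c. c x * (gen x z - lin hh (bdg V E k x) z))"
        unfolding lin_apply[of "\<lambda>x. lin (bdg V E (Suc k)) (hh x)" c z]
      proof (rule sum.cong[OF refl])
        fix x assume x: "x \<in> supp c"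
        have "\<exists>m. P x m" using Igen_P[OF cI[OF x]] assms by blast
        then have "lin (bdg V E (Suc k)) (hh x) z = gen x z - lin hh (bdg V E k x) z"
          using GenId[OF cI[OF x]] by (simp add: eq_diff_eq)
        then show "c x * lin (bdg V E (Suc k)) (hh x) z = c x * (gen x z - lin hh (bdg V E k x) z)"
          by simp
      qed
      also have "\<dots> = lin gen c z - lin (\<lambda>x. lin hh (bdg V E k x)) c z"
        by (simp add: lin_def right_diff_distrib sum_subtractf)
      also have "lin (\<lambda>x. lin hh (bdg V E k x)) c z = lin hh (bd V E k l c) z"
        unfolding bd_lin using lin_compose[of c "bdg V E k" hh z, OF fc bdg_fin] by simp
      also have "\<dots> = 0" using bc lin_zero by simp
      finally show ?thesis using lin_gen_sum[OF fc] by simp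
    qed
    then show ?thesis using bM by blast
  qed
qed

end

theorem proposition3p1:
  fixes V :: "'a set" and E :: "'a \<Rightarrow> 'a \<Rightarrow> bool"
  assumes "is_tree V E"
  shows "diagonal V E"
proof -
  interpret tr V E using assms by unfold_locales
  show ?thesis unfolding diagonal_def using MHz by blast
qed


end
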